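(* For every Keedwell Sudoku board $B$ and every $g\in G_k$, the board $g\cdot B$ is Keedwell and has the same linearity degree as $B$.
   Context: A Sudoku board is a $9\times 9$ array with entries from $\{0,\dots,8\}$ such that every row, column and each of the nine $3\times 3$ blocks (subsquares) contains each symbol once; the subsquare in block-row $i$ and block-column $j$ ($i,j\in\{0,1,2\}$) is the $(i,j)$th subsquare. The full Sudoku symmetry group is $G_9=H_9\times S_9$, where $H_9$ is the group of cell rearrangements generated by permutations of the three bands (horizontal strips of blocks), permutations of the rows within a band, permutations of the three pillars (vertical strips of blocks), permutations of the columns within a pillar, and the transpose, and $S_9$ is the group of all relabelings (permutations of the symbols applied to every entry). For a $3\times 3$ array, let $\alpha$ cycle its rows down by one and $\beta$ cycle its columns right by one; both have order $3$. A Sudoku board $B$ with upper-left subsquare $K$ is Keedwell if there are exponents $c_{ij},d_{ij}\in\mathbb{Z}/3\mathbb{Z}$ ($i,j\in\{0,1,2\}$) with $c_{00}=d_{00}=0$ such that the $(i,j)$th subsquare of $B$ is $\alpha^{c_{ij}}\beta^{d_{ij}}K$; since $K$ has nine distinct entries, these exponent matrices $\{c_{ij}\}$, $\{d_{ij}\}$ are uniquely determined by $B$. A matrix $\{m_{ij}\}_{i,j\in\{0,1,2\}}$ over $\mathbb{Z}/3\mathbb{Z}$ is quasi-linear if $m_{ij}=m_{i0}+m_{0j}$ for all $i,j$. The linearity degree of a Keedwell board is the number (0, 1 or 2) of its two exponent matrices $\{c_{ij}\}$, $\{d_{ij}\}$ that are quasi-linear. $G_k$ is the set of all $g\in G_9$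 that map the set of Keedwell boards to itself. *)

theory Defs
  imports "HOL-Combinatorics.Permutations"
begin

text \<open>Boards: functions nat => nat => nat; cell (i,j) with i,j < 9 holds a symbol < 9,
  cells outside the grid are 0 (extensional convention).\<close>
type_synonym board = "nat \<Rightarrow> nat \<Rightarrow> nat"
type_synonym cellperm = "nat \<times> nat \<Rightarrow> nat \<times> nat"

definition sudoku :: "board \<Rightarrow> bool" where
  "sudoku B \<longleftrightarrow>
     (\<forall>i j. \<not> (i < 9 \<and> j < 9) \<longrightarrow> B i j = 0) \<and>
     (\<forall>i<9. bij_betw (\<lambda>j. B i j) {..<9} {..<9}) \<and>
     (\<forall>j<9. bij_betw (\<lambda>i. B i j) {..<9} {..<9}) \<and>
     (\<forall>a<3. \<forall>b<3. bij_betw (\<lambda>(r, s). B (3*a + r) (3*b + s)) ({..<3} \<times> {..<3}) {..<9})"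

definition band_perm :: "(nat \<Rightarrow> nat) \<Rightarrow> cellperm" where
  "band_perm \<sigma> = (\<lambda>(i, j). if i < 9 \<and> j < 9 then (3 * \<sigma> (i div 3) + i mod 3, j) else (i, j))"

definition row_perm :: "nat \<Rightarrow> (nat \<Rightarrow> nat) \<Rightarrow> cellperm" where
  "row_perm b \<sigma> = (\<lambda>(i, j). if i < 9 \<and> j < 9 \<and> i div 3 = b then (3 * b + \<sigma> (i mod 3), j) else (i, j))"

definition pillar_perm :: "(nat \<Rightarrow> nat) \<Rightarrow> cellperm" where
  "pillar_perm \<sigma> = (\<lambda>(i, j). if i < 9 \<and> j < 9 then (i, 3 * \<sigma> (j div 3) + j mod 3) else (i, j))"

definition col_perm :: "nat \<Rightarrow> (nat \<Rightarrow> nat) \<Rightarrow> cellperm" where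
  "col_perm b \<sigma> = (\<lambda>(i, j). if i < 9 \<and> j < 9 \<and> j div 3 = b then (i, 3 * b + \<sigma> (j mod 3)) else (i, j))"

definition transp :: cellperm where
  "transp = (\<lambda>(i, j). (j, i))"

inductive H9_gen :: "cellperm \<Rightarrow> bool" where
  band: "\<sigma> permutes {..<3} \<Longrightarrow> H9_gen (band_perm \<sigma>)"
| row: "b < 3 \<Longrightarrow> \<sigma> permutes {..<3} \<Longrightarrow> H9_gen (row_perm b \<sigma>)"
| pillar: "\<sigma> permutes {..<3} \<Longrightarrow> H9_gen (pillar_perm \<sigma>)"
| col: "b < 3 \<Longrightarrow> \<sigma> permutes {..<3} \<Longrightarrow> H9_gen (col_perm b \<sigma>)"
| tr: "H9_gen transp"

text \<open>The group generated (the generator set is closed under inverses and the group is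
  finite, so closure under composition gives the generated group).\<close>
inductive_set H9 :: "cellperm set" where
  ident: "id \<in> H9"
| comp: "H9_gen p \<Longrightarrow> q \<in> H9 \<Longrightarrow> p \<circ> q \<in> H9"

definition G9 :: "(cellperm \<times> (nat \<Rightarrow> nat)) set" where
  "G9 = {(p, \<sigma>). p \<in> H9 \<and> \<sigma> permutes {..<9}}"

definition act :: "cellperm \<times> (nat \<Rightarrow> nat) \<Rightarrow> board \<Rightarrow> board" where
  "act g B = (\<lambda>i j. if i < 9 \<and> j < 9
                     then snd g (B (fst (fst g (i, j))) (snd (fst g (i, j)))) else 0)"

text \<open>3x3 arrays: alpha cycles rows down by one, beta cycles columns right by one.\<close>
definition alpha :: "board \<Rightarrow> board" where
  "alpha K = (\<lambda>r s. K ((r + 2) mod 3) s)"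

definition beta :: "board \<Rightarrow> board" where
  "beta K = (\<lambda>r s. K r ((s + 2) mod 3))"

definition keedwell_exps :: "board \<Rightarrow> (nat \<Rightarrow> nat \<Rightarrow> nat) \<Rightarrow> (nat \<Rightarrow> nat \<Rightarrow> nat) \<Rightarrow> bool" where
  "keedwell_exps B c d \<longleftrightarrow>
     c 0 0 = 0 \<and> d 0 0 = 0 \<and> (\<forall>i<3. \<forall>j<3. c i j < 3 \<and> d i j < 3) \<and>
     (\<forall>i<3. \<forall>j<3. \<forall>r<3. \<forall>s<3.
        B (3*i + r) (3*j + s) = ((alpha ^^ c i j) ((beta ^^ d i j) (\<lambda>r s. B r s))) r s)"

definition keedwell :: "board \<Rightarrow> bool" where
  "keedwell B \<longleftrightarrow> sudoku B \<and> (\<exists>c d. keedwell_exps B c d)"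

definition quasi_linear :: "(nat \<Rightarrow> nat \<Rightarrow> nat) \<Rightarrow> bool" where
  "quasi_linear m \<longleftrightarrow> (\<forall>i<3. \<forall>j<3. m i j mod 3 = (m i 0 + m 0 j) mod 3)"

definition lin_deg :: "(nat \<Rightarrow> nat \<Rightarrow> nat) \<Rightarrow> (nat \<Rightarrow> nat \<Rightarrow> nat) \<Rightarrow> nat" where
  "lin_deg c d = (if quasi_linear c then 1 else 0) + (if quasi_linear d then 1 else 0)"

definition linearity_degree :: "board \<Rightarrow> nat" where
  "linearity_degree B = (THE n. \<exists>c d. keedwell_exps B c d \<and> n = lin_deg c d)"

definition Gk :: "(cellperm \<times> (nat \<Rightarrow> nat)) set" where
  "Gk = {g \<in> G9. \<forall>B. keedwell B \<longrightarrow> keedwell (act g B)}"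

end

theory Submission
  imports Defs
begin

definition mr :: "board \<Rightarrow> nat \<Rightarrow> nat \<Rightarrow> nat \<Rightarrow> nat set" where
  "mr B i r j = (\<lambda>s. B (3*i+r) (3*j+s)) ` {..<3}"
definition mc :: "board \<Rightarrow> nat \<Rightarrow> nat \<Rightarrow> nat \<Rightarrow> nat set" where
  "mc B i j s = (\<lambda>r. B (3*i+r) (3*j+s)) ` {..<3}"
definition Prow :: "board \<Rightarrow> bool" where
  "Prow B \<longleftrightarrow> (\<forall>i<3. \<forall>k<3. \<forall>r<3. \<exists>t<3. \<forall>j<3. mr B i r j = mr B k t j)"
definition Pcol :: "board \<Rightarrow> bool" where
  "Pcol B \<longleftrightarrow> (\<forall>j<3. \<forall>l<3. \<forall>s<3. \<exists>t<3. \<forall>i<3. mc B i j s = mc B i l t)"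
definition inv9 :: "board \<Rightarrow> nat" where
  "inv9 B = (if Prow B then 1 else 0) + (if Pcol B then 1 else 0)"

definition onto3 :: "(nat \<Rightarrow> nat) \<Rightarrow> bool" where
  "onto3 f \<longleftrightarrow> (\<forall>x<3. f x < 3) \<and> (\<forall>y<3. \<exists>x<3. f x = y)"

lemma onto3_id: "onto3 (\<lambda>x. x)" by (auto simp: onto3_def)

lemma onto3_perm: "\<sigma> permutes {..<3} \<Longrightarrow> onto3 \<sigma>"
proof -
  assume a: "\<sigma> permutes {..<(3::nat)}"
  then have "bij_betw \<sigma> {..<3} {..<3}" by (rule permutes_imp_bij)
  then have "\<sigma> ` {..<3} = {..<3}" by (simp add: bij_betw_def)
  note img = this
  show ?thesis unfolding onto3_def
  proof (intro conjI allI impI)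
    fix x :: nat assume "x<3"
    then have "\<sigma> x \<in> \<sigma> ` {..<3}" by blast
    then show "\<sigma> x < 3" using img by simp
  next
    fix y :: nat assume "y<3"
    then have "y \<in> \<sigma> ` {..<3}" using img by simp
    then show "\<exists>x<3. \<sigma> x = y" by auto
  qed
qed

lemma onto3_img: "onto3 k \<Longrightarrow> (\<lambda>s. F (k s)) ` {..<3} = F ` {..<(3::nat)}"
  unfolding onto3_def by (auto simp: image_iff)

lemma gen_inv:
  assumes of: "onto3 f" and oh: "onto3 h" and og: "\<forall>i<3. onto3 (g i)" and ok: "\<forall>j<3. onto3 (k j)"
    and eq: "\<forall>i<3. \<forall>r<3. \<forall>j<3. \<forall>s<3. B' (3*i+r) (3*j+s) = B (3*f i + g i r) (3*h j + k j s)"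
  shows "Prow B' = Prow B \<and> Pcol B' = Pcol B"
proof -
  have mr1: "mr B' i r j = mr B (f i) (g i r) (h j)" if "i<3" "r<3" "j<3" for i r j
  proof -
    have "mr B' i r j = (\<lambda>s. B (3*f i + g i r) (3*h j + k j s)) ` {..<3}"
      unfolding mr_def using eq that by (intro image_cong) auto
    also have "\<dots> = mr B (f i) (g i r) (h j)" unfolding mr_def
      using onto3_img[of "k j" "\<lambda>s. B (3*f i + g i r) (3*h j + s)"] ok that by auto
    finally show ?thesis .
  qed
  have mc1: "mc B' i j s = mc B (f i) (h j) (k j s)" if "i<3" "s<3" "j<3" for i s j
  proof -
    have "mc B' i j s = (\<lambda>r. B (3*f i + g i r) (3*h j + k j s)) ` {..<3}"
      unfolding mc_def using eq that by (intro image_cong) auto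
    also have "\<dots> = mc B (f i) (h j) (k j s)" unfolding mc_def
      using onto3_img[of "g i" "\<lambda>r. B (3*f i + r) (3*h j + k j s)"] og that by auto
    finally show ?thesis .
  qed
  have fl: "\<And>x. x<3 \<Longrightarrow> f x < 3" and fs: "\<And>y. y<3 \<Longrightarrow> \<exists>x<3. f x = y" using of by (auto simp: onto3_def)
  have hl: "\<And>x. x<3 \<Longrightarrow> h x < 3" and hs: "\<And>y. y<3 \<Longrightarrow> \<exists>x<3. h x = y" using oh by (auto simp: onto3_def)
  have gl: "\<And>i x. i<3 \<Longrightarrow> x<3 \<Longrightarrow> g i x < 3" and gs: "\<And>i y. i<3 \<Longrightarrow> y<3 \<Longrightarrow> \<exists>x<3. g i x = y"
    using og by (auto simp: onto3_def)
  have kl: "\<And>i x. i<3 \<Longrightarrow> x<3 \<Longrightarrow> k i x < 3" and ks: "\<And>i y. i<3 \<Longrightarrow> y<3 \<Longrightarrow> \<exists>x<3. k i x = y"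
    using ok by (auto simp: onto3_def)
  have A: "Prow B' = Prow B"
  proof
    assume P: "Prow B'"
    show "Prow B" unfolding Prow_def
    proof (intro allI impI)
      fix i k r :: nat assume ir: "i<3" "k<3" "r<3"
      obtain i' where i': "i'<3" "f i' = i" using fs ir by blast
      obtain k' where k': "k'<3" "f k' = k" using fs ir by blast
      obtain r' where r': "r'<3" "g i' r' = r" using gs ir i' by blast
      obtain t' where t': "t'<3" "\<forall>j<3. mr B' i' r' j = mr B' k' t' j"
        using P[unfolded Prow_def, rule_format, OF i'(1) k'(1) r'(1)] by blast
      show "\<exists>t<3. \<forall>j<3. mr B i r j = mr B k t j"
      proof (intro exI[of _ "g k' t'"] conjI allI impI)
        show "g k' t' < 3" using gl k' t' by auto
        fix j :: nat assume j: "j<3"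
        obtain j' where j': "j'<3" "h j' = j" using hs j by blast
        have "mr B i r j = mr B (f i') (g i' r') (h j')" using i' r' j' by simp
        also have "\<dots> = mr B' i' r' j'" using mr1 i' r' j' by simp
        also have "\<dots> = mr B' k' t' j'" using t' j' by simp
        also have "\<dots> = mr B (f k') (g k' t') (h j')" using mr1 k' t' j' by simp
        finally show "mr B i r j = mr B k (g k' t') j" using k' j' by simp
      qed
    qed
  next
    assume P: "Prow B"
    show "Prow B'" unfolding Prow_def
    proof (intro allI impI)
      fix i k r :: nat assume ir: "i<3" "k<3" "r<3"
      obtain t where t: "t<3" "\<forall>j<3. mr B (f i) (g i r) j = mr B (f k) t j"
        using P[unfolded Prow_def, rule_format, OF fl[OF ir(1)] fl[OF ir(2)] gl[OF ir(1) ir(3)]] by blast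
      obtain t' where t': "t'<3" "g k t' = t" using gs ir t by blast
      show "\<exists>t<3. \<forall>j<3. mr B' i r j = mr B' k t j"
      proof (intro exI[of _ t'] conjI allI impI)
        fix j :: nat assume j: "j<3"
        have "mr B' i r j = mr B (f i) (g i r) (h j)" using mr1 ir j by simp
        also have "\<dots> = mr B (f k) t (h j)" using t hl j by simp
        also have "\<dots> = mr B' k t' j" using mr1 ir t' j by simp
        finally show "mr B' i r j = mr B' k t' j" .
      qed (fact t')
    qed
  qed
  have C: "Pcol B' = Pcol B"
  proof
    assume P: "Pcol B'"
    show "Pcol B" unfolding Pcol_def
    proof (intro allI impI)
      fix j l s :: nat assume ir: "j<3" "l<3" "s<3"
      obtain j' where j': "j'<3" "h j' = j" using hs ir by blast
      obtain l' where l': "l'<3" "h l' = l" using hs ir by blast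
      obtain s' where s': "s'<3" "k j' s' = s" using ks ir j' by blast
      obtain t' where t': "t'<3" "\<forall>i<3. mc B' i j' s' = mc B' i l' t'"
        using P[unfolded Pcol_def, rule_format, OF j'(1) l'(1) s'(1)] by blast
      show "\<exists>t<3. \<forall>i<3. mc B i j s = mc B i l t"
      proof (intro exI[of _ "k l' t'"] conjI allI impI)
        show "k l' t' < 3" using kl l' t' by auto
        fix i :: nat assume i: "i<3"
        obtain i' where i': "i'<3" "f i' = i" using fs i by blast
        have "mc B i j s = mc B (f i') (h j') (k j' s')" using i' j' s' by simp
        also have "\<dots> = mc B' i' j' s'" using mc1 i' s' j' by simp
        also have "\<dots> = mc B' i' l' t'" using t' i' by simp
        also have "\<dots> = mc B (f i') (h l') (k l' t')" using mc1 i' l' t' by simp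
        finally show "mc B i j s = mc B i l (k l' t')" using i' l' by simp
      qed
    qed
  next
    assume P: "Pcol B"
    show "Pcol B'" unfolding Pcol_def
    proof (intro allI impI)
      fix j l s :: nat assume ir: "j<3" "l<3" "s<3"
      obtain t where t: "t<3" "\<forall>i<3. mc B i (h j) (k j s) = mc B i (h l) t"
        using P[unfolded Pcol_def, rule_format, OF hl[OF ir(1)] hl[OF ir(2)] kl[OF ir(1) ir(3)]] by blast
      obtain t' where t': "t'<3" "k l t' = t" using ks ir t by blast
      show "\<exists>t<3. \<forall>i<3. mc B' i j s = mc B' i l t"
      proof (intro exI[of _ t'] conjI allI impI)
        fix i :: nat assume i: "i<3"
        have "mc B' i j s = mc B (f i) (h j) (k j s)" using mc1 ir i by simp
        also have "\<dots> = mc B (f i) (h l) t" using t fl i by simp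
        also have "\<dots> = mc B' i l t'" using mc1 ir t' i by simp
        finally show "mc B' i j s = mc B' i l t'" .
      qed (fact t')
    qed
  qed
  show ?thesis using A C by simp
qed

lemma tr_inv:
  assumes eq: "\<forall>i<3. \<forall>r<3. \<forall>j<3. \<forall>s<3. B' (3*i+r) (3*j+s) = B (3*j+s) (3*i+r)"
  shows "Prow B' = Pcol B \<and> Pcol B' = Prow B"
proof -
  have 1: "mr B' i r j = mc B j i r" if "i<3" "r<3" "j<3" for i r j
    unfolding mr_def mc_def using eq that by (intro image_cong) auto
  have 2: "mc B' i j s = mr B j s i" if "i<3" "s<3" "j<3" for i s j
    unfolding mr_def mc_def using eq that by (intro image_cong) auto
  show ?thesis unfolding Prow_def Pcol_def by (simp add: 1 2 cong: conj_cong)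
qed

lemma gen_inv9:
  assumes "onto3 f" "onto3 h" "\<forall>i<3. onto3 (g i)" "\<forall>j<3. onto3 (k j)"
    "\<forall>i<3. \<forall>r<3. \<forall>j<3. \<forall>s<3. B' (3*i+r) (3*j+s) = B (3*f i + g i r) (3*h j + k j s)"
  shows "inv9 B' = inv9 B"
  using gen_inv[OF assms] unfolding inv9_def by simp

lemma tr_inv9:
  assumes "\<forall>i<3. \<forall>r<3. \<forall>j<3. \<forall>s<3. B' (3*i+r) (3*j+s) = B (3*j+s) (3*i+r)"
  shows "inv9 B' = inv9 B"
  using tr_inv[OF assms] unfolding inv9_def by simp

definition cellboard :: "cellperm \<Rightarrow> board \<Rightarrow> board" where
  "cellboard p B = (\<lambda>i j. if i < 9 \<and> j < 9 then B (fst (p (i, j))) (snd (p (i, j))) else 0)"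

definition relabel :: "(nat \<Rightarrow> nat) \<Rightarrow> board \<Rightarrow> board" where
  "relabel \<sigma> C = (\<lambda>i j. if i < 9 \<and> j < 9 then \<sigma> (C i j) else 0)"

definition gridp :: "cellperm \<Rightarrow> bool" where
  "gridp p \<longleftrightarrow> (\<forall>i j. i < 9 \<and> j < 9 \<longrightarrow> fst (p (i, j)) < 9 \<and> snd (p (i, j)) < 9)"

lemma dm3: "(r::nat) < 3 \<Longrightarrow> (3*i+r) div 3 = i" "(r::nat) < 3 \<Longrightarrow> (3*i+r) mod 3 = r"
  "(i::nat) < 3 \<Longrightarrow> r < 3 \<Longrightarrow> 3*i+r < 9"
  by auto

lemma onto3_lt: "onto3 f \<Longrightarrow> x < 3 \<Longrightarrow> f x < 3" by (simp add: onto3_def)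

lemma gen_lemma: "H9_gen p \<Longrightarrow> gridp p \<and> (\<forall>B. inv9 (cellboard p B) = inv9 B)"
proof (induction rule: H9_gen.induct)
  case (band \<sigma>)
  have o: "onto3 \<sigma>" using band onto3_perm by blast
  have g: "gridp (band_perm \<sigma>)" unfolding gridp_def band_perm_def
  proof (intro allI impI)
    fix i j :: nat assume a: "i < 9 \<and> j < 9"
    have "i div 3 < 3" using a by auto
    then have "\<sigma> (i div 3) < 3" by (rule onto3_lt[OF o])
    then show "fst ((\<lambda>(i, j). if i < 9 \<and> j < 9 then (3 * \<sigma> (i div 3) + i mod 3, j) else (i, j)) (i, j)) < 9 \<and>
         snd ((\<lambda>(i, j). if i < 9 \<and> j < 9 then (3 * \<sigma> (i div 3) + i mod 3, j) else (i, j)) (i, j)) < 9"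
      using a by auto
  qed
  have "inv9 (cellboard (band_perm \<sigma>) B) = inv9 B" for B
    by (rule gen_inv9[where f=\<sigma> and g="\<lambda>_ r. r" and h="\<lambda>x. x" and k="\<lambda>_ s. s"])
       (auto simp: o onto3_id cellboard_def band_perm_def dm3)
  then show ?case using g by blast
next
  case (row b \<sigma>)
  have o: "onto3 \<sigma>" using row onto3_perm by blast
  have g: "gridp (row_perm b \<sigma>)" unfolding gridp_def row_perm_def
  proof (intro allI impI)
    fix i j :: nat assume a: "i < 9 \<and> j < 9"
    have "i mod 3 < 3" using a by auto
    then have "\<sigma> (i mod 3) < 3" by (rule onto3_lt[OF o])
    then show "fst ((\<lambda>(i, j). if i < 9 \<and> j < 9 \<and> i div 3 = b then (3 * b + \<sigma> (i mod 3), j) else (i, j)) (i, j)) < 9 \<and>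
         snd ((\<lambda>(i, j). if i < 9 \<and> j < 9 \<and> i div 3 = b then (3 * b + \<sigma> (i mod 3), j) else (i, j)) (i, j)) < 9"
      using a row by auto
  qed
  have og: "\<forall>i<3. onto3 (if i = b then \<sigma> else (\<lambda>r. r))" using o onto3_id by auto
  have "inv9 (cellboard (row_perm b \<sigma>) B) = inv9 B" for B
    by (rule gen_inv9[where f="\<lambda>x. x" and g="\<lambda>i. if i = b then \<sigma> else (\<lambda>r. r)" and h="\<lambda>x. x" and k="\<lambda>_ s. s"])
       (auto simp: og onto3_id cellboard_def row_perm_def dm3)
  then show ?case using g by blast
next
  case (pillar \<sigma>)
  have o: "onto3 \<sigma>" using pillar onto3_perm by blast
  have g: "gridp (pillar_perm \<sigma>)" unfolding gridp_def pillar_perm_def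
  proof (intro allI impI)
    fix i j :: nat assume a: "i < 9 \<and> j < 9"
    have "j div 3 < 3" using a by auto
    then have "\<sigma> (j div 3) < 3" by (rule onto3_lt[OF o])
    then show "fst ((\<lambda>(i, j). if i < 9 \<and> j < 9 then (i, 3 * \<sigma> (j div 3) + j mod 3) else (i, j)) (i, j)) < 9 \<and>
         snd ((\<lambda>(i, j). if i < 9 \<and> j < 9 then (i, 3 * \<sigma> (j div 3) + j mod 3) else (i, j)) (i, j)) < 9"
      using a by auto
  qed
  have "inv9 (cellboard (pillar_perm \<sigma>) B) = inv9 B" for B
    by (rule gen_inv9[where f="\<lambda>x. x" and g="\<lambda>_ r. r" and h=\<sigma> and k="\<lambda>_ s. s"])
       (auto simp: o onto3_id cellboard_def pillar_perm_def dm3)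
  then show ?case using g by blast
next
  case (col b \<sigma>)
  have o: "onto3 \<sigma>" using col onto3_perm by blast
  have g: "gridp (col_perm b \<sigma>)" unfolding gridp_def col_perm_def
  proof (intro allI impI)
    fix i j :: nat assume a: "i < 9 \<and> j < 9"
    have "j mod 3 < 3" using a by auto
    then have "\<sigma> (j mod 3) < 3" by (rule onto3_lt[OF o])
    then show "fst ((\<lambda>(i, j). if i < 9 \<and> j < 9 \<and> j div 3 = b then (i, 3 * b + \<sigma> (j mod 3)) else (i, j)) (i, j)) < 9 \<and>
         snd ((\<lambda>(i, j). if i < 9 \<and> j < 9 \<and> j div 3 = b then (i, 3 * b + \<sigma> (j mod 3)) else (i, j)) (i, j)) < 9"
      using a col by auto
  qed
  have ok: "\<forall>j<3. onto3 (if j = b then \<sigma> else (\<lambda>r. r))" using o onto3_id by auto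
  have "inv9 (cellboard (col_perm b \<sigma>) B) = inv9 B" for B
    by (rule gen_inv9[where f="\<lambda>x. x" and g="\<lambda>_ r. r" and h="\<lambda>x. x" and k="\<lambda>j. if j = b then \<sigma> else (\<lambda>r. r)"])
       (auto simp: ok onto3_id cellboard_def col_perm_def dm3)
  then show ?case using g by blast
next
  case tr
  have g: "gridp transp" by (simp add: gridp_def transp_def)
  have "inv9 (cellboard transp B) = inv9 B" for B
    by (rule tr_inv9) (auto simp: cellboard_def transp_def dm3)
  then show ?case using g by blast
qed

lemma H9_lemma: "p \<in> H9 \<Longrightarrow> gridp p \<and> (\<forall>B. inv9 (cellboard p B) = inv9 B)"
proof (induction rule: H9.induct)
  case ident
  have "inv9 (cellboard id B) = inv9 B" for B
    by (rule gen_inv9[where f="\<lambda>x. x" and g="\<lambda>_ r. r" and h="\<lambda>x. x" and k="\<lambda>_ s. s"])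
       (auto simp: onto3_id cellboard_def dm3)
  then show ?case by (simp add: gridp_def id_def)
next
  case (comp p q)
  have gp: "gridp p" and ip: "\<forall>B. inv9 (cellboard p B) = inv9 B" using gen_lemma[OF comp(1)] by auto
  have gq: "gridp q" and iq: "\<forall>B. inv9 (cellboard q B) = inv9 B" using comp(3) by auto
  have e: "cellboard (p \<circ> q) B = cellboard q (cellboard p B)" for B
    using gq unfolding cellboard_def gridp_def by (auto simp: fun_eq_iff)
  have "gridp (p \<circ> q)" unfolding gridp_def
  proof (intro allI impI)
    fix i j :: nat assume a: "i < 9 \<and> j < 9"
    obtain x y where xy: "q (i, j) = (x, y)" by (cases "q (i, j)")
    then have "x < 9 \<and> y < 9" using gq a unfolding gridp_def by (metis fst_conv snd_conv)
    then have "fst (p (x, y)) < 9 \<and> snd (p (x, y)) < 9" using gp unfolding gridp_def by blast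
    then show "fst ((p \<circ> q) (i, j)) < 9 \<and> snd ((p \<circ> q) (i, j)) < 9" using xy by simp
  qed
  moreover have "inv9 (cellboard (p \<circ> q) B) = inv9 B" for B using e ip iq by simp
  ultimately show ?case by blast
qed

lemma relabel_inv9:
  assumes inj: "inj \<sigma>"
  shows "inv9 (relabel \<sigma> C) = inv9 C"
proof -
  have m1: "mr (relabel \<sigma> C) i r j = \<sigma> ` mr C i r j" if "i<3" "r<3" "j<3" for i r j
    unfolding mr_def relabel_def image_image using that by (intro image_cong) auto
  have m2: "mc (relabel \<sigma> C) i j s = \<sigma> ` mc C i j s" if "i<3" "s<3" "j<3" for i s j
    unfolding mc_def relabel_def image_image using that by (intro image_cong) auto
  have "Prow (relabel \<sigma> C) = Prow C"
    unfolding Prow_def by (simp add: m1 inj_image_eq_iff[OF inj] cong: conj_cong)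
  moreover have "Pcol (relabel \<sigma> C) = Pcol C"
    unfolding Pcol_def by (simp add: m2 inj_image_eq_iff[OF inj] cong: conj_cong)
  ultimately show ?thesis unfolding inv9_def by simp
qed

lemma act_decomp: "act (p, \<sigma>) B = relabel \<sigma> (cellboard p B)"
  by (simp add: fun_eq_iff act_def relabel_def cellboard_def)

lemma G9_inv9: "g \<in> G9 \<Longrightarrow> inv9 (act g B) = inv9 B"
proof -
  assume "g \<in> G9"
  then obtain p \<sigma> where g: "g = (p, \<sigma>)" and p: "p \<in> H9" and s: "\<sigma> permutes {..<9}"
    unfolding G9_def by auto
  have "inj \<sigma>" using s by (rule permutes_inj)
  then show ?thesis using g H9_lemma[OF p] act_decomp relabel_inv9 by simp
qed

lemma alpha_pow: "r < 3 \<Longrightarrow> (alpha ^^ n) K r s = K ((r + 2*n) mod 3) s"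
proof (induction n arbitrary: r)
  case 0 then show ?case by simp
next
  case (Suc n)
  have "(alpha ^^ Suc n) K r s = (alpha ^^ n) K ((r + 2) mod 3) s" by (simp add: alpha_def)
  also have "\<dots> = K (((r + 2) mod 3 + 2*n) mod 3) s" using Suc.IH by simp
  also have "((r + 2) mod 3 + 2*n) mod 3 = (r + 2 + 2*n) mod 3" by (rule mod_add_left_eq)
  also have "(r + 2 + 2*n) mod 3 = (r + 2 * Suc n) mod 3" by simp
  finally show ?case .
qed

lemma beta_pow: "s < 3 \<Longrightarrow> (beta ^^ n) K r s = K r ((s + 2*n) mod 3)"
proof (induction n arbitrary: s)
  case 0 then show ?case by simp
next
  case (Suc n)
  have "(beta ^^ Suc n) K r s = (beta ^^ n) K r ((s + 2) mod 3)" by (simp add: beta_def)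
  also have "\<dots> = K r (((s + 2) mod 3 + 2*n) mod 3)" using Suc.IH by simp
  also have "((s + 2) mod 3 + 2*n) mod 3 = (s + 2 + 2*n) mod 3" by (rule mod_add_left_eq)
  also have "(s + 2 + 2*n) mod 3 = (s + 2 * Suc n) mod 3" by simp
  finally show ?case .
qed

lemma keed_val:
  assumes "keedwell_exps B c d" "i<3" "j<3" "r<3" "s<3"
  shows "B (3*i+r) (3*j+s) = B ((r + 2 * c i j) mod 3) ((s + 2 * d i j) mod 3)"
proof -
  have "B (3*i+r) (3*j+s) = ((alpha ^^ c i j) ((beta ^^ d i j) (\<lambda>r s. B r s))) r s"
    using assms unfolding keedwell_exps_def by blast
  also have "\<dots> = ((beta ^^ d i j) (\<lambda>r s. B r s)) ((r + 2 * c i j) mod 3) s"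
    by (rule alpha_pow[OF assms(4)])
  also have "\<dots> = B ((r + 2 * c i j) mod 3) ((s + 2 * d i j) mod 3)"
    by (rule beta_pow[OF assms(5)])
  finally show ?thesis .
qed

lemma img_shift: "(\<lambda>s. (s + m) mod 3) ` {..<3} = {..<(3::nat)}"
proof
  show "(\<lambda>s. (s + m) mod 3) ` {..<3} \<subseteq> {..<(3::nat)}" by auto
  show "{..<3} \<subseteq> (\<lambda>s. (s + m) mod 3) ` {..<(3::nat)}"
  proof
    fix y :: nat assume y: "y \<in> {..<3}"
    have "((y + 2*m) mod 3 + m) mod 3 = (y + 2*m + m) mod 3" by (rule mod_add_left_eq)
    also have "\<dots> = (y + 3*m) mod 3" by simp
    also have "\<dots> = y" using y by simp
    finally show "y \<in> (\<lambda>s. (s + m) mod 3) ` {..<3}"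
      by (intro image_eqI[of _ _ "(y + 2*m) mod 3"]) auto
  qed
qed

lemma mr_keed:
  assumes "keedwell_exps B c d" "i<3" "r<3" "j<3"
  shows "mr B i r j = (\<lambda>s. B ((r + 2 * c i j) mod 3) s) ` {..<3}"
proof -
  have "mr B i r j = (\<lambda>s. B ((r + 2 * c i j) mod 3) ((s + 2 * d i j) mod 3)) ` {..<3}"
    unfolding mr_def using keed_val[OF assms(1,2,4,3)] by (intro image_cong) auto
  also have "\<dots> = (\<lambda>s. B ((r + 2 * c i j) mod 3) s) ` ((\<lambda>s. (s + 2 * d i j) mod 3) ` {..<3})"
    by (simp add: image_image)
  finally show ?thesis by (simp only: img_shift)
qed

lemma mc_keed:
  assumes "keedwell_exps B c d" "i<3" "s<3" "j<3"
  shows "mc B i j s = (\<lambda>r. B r ((s + 2 * d i j) mod 3)) ` {..<3}"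
proof -
  have "mc B i j s = (\<lambda>r. B ((r + 2 * c i j) mod 3) ((s + 2 * d i j) mod 3)) ` {..<3}"
    unfolding mc_def using keed_val[OF assms(1,2,4) _ assms(3)] by (intro image_cong) auto
  also have "\<dots> = (\<lambda>r. B r ((s + 2 * d i j) mod 3)) ` ((\<lambda>r. (r + 2 * c i j) mod 3) ` {..<3})"
    by (simp add: image_image)
  finally show ?thesis by (simp only: img_shift)
qed

lemma blk_inj: "sudoku B \<Longrightarrow> inj_on (\<lambda>(r, s). B r s) ({..<3} \<times> {..<3})"
proof -
  assume "sudoku B"
  then have "\<forall>a<3. \<forall>b<3. bij_betw (\<lambda>(r, s). B (3*a + r) (3*b + s)) ({..<3} \<times> {..<3}) {..<9}"
    unfolding sudoku_def by (elim conjE)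
  then have "bij_betw (\<lambda>(r, s). B (3*0 + r) (3*0 + s)) ({..<3} \<times> {..<3}) {..<9}"
    by (elim allE[of _ 0] impE) simp_all
  then show ?thesis by (simp add: bij_betw_def)
qed

lemma R_inj:
  assumes "sudoku B" "x<3" "y<3" "(\<lambda>s. B x s) ` {..<3} = (\<lambda>s. B y s) ` {..<3}"
  shows "x = y"
proof -
  have "B x 0 \<in> (\<lambda>s. B x s) ` {..<3}" by auto
  then have "B x 0 \<in> (\<lambda>s. B y s) ` {..<3}" using assms(4) by simp
  then obtain s where s: "s < 3" "B x 0 = B y s" by auto
  have "(x, 0) = (y, s)" using inj_onD[OF blk_inj[OF assms(1)], of "(x,0)" "(y,s)"] s assms by auto
  then show ?thesis by simp
qed

lemma C_inj:
  assumes "sudoku B" "x<3" "y<3" "(\<lambda>r. B r x) ` {..<3} = (\<lambda>r. B r y) ` {..<3}"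
  shows "x = y"
proof -
  have "B 0 x \<in> (\<lambda>r. B r x) ` {..<3}" by auto
  then have "B 0 x \<in> (\<lambda>r. B r y) ` {..<3}" using assms(4) by simp
  then obtain r where r: "r < 3" "B 0 x = B r y" by auto
  have "(0, x) = (r, y)" using inj_onD[OF blk_inj[OF assms(1)], of "(0,x)" "(r,y)"] r assms by auto
  then show ?thesis by simp
qed

lemma modeq: "((a::nat) mod 3 = b mod 3) = ((3::int) dvd (int a - int b))"
proof -
  have "(a mod 3 = b mod 3) = (int (a mod 3) = int (b mod 3))" by (rule of_nat_eq_iff[symmetric])
  also have "\<dots> = (int a mod 3 = int b mod 3)" by (simp add: zmod_int)
  also have "\<dots> = ((3::int) dvd (int a - int b))" by (rule mod_eq_dvd_iff)
  finally show ?thesis .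
qed
lemma ar1: "(2*a) mod 3 = (t + 2*b) mod 3 \<Longrightarrow> (2*x) mod 3 = t mod 3 \<Longrightarrow> a mod 3 = (x + b) mod (3::nat)"
proof -
  assume h1: "(2*a) mod 3 = (t + 2*b) mod 3" and h2: "(2*x) mod 3 = t mod 3"
  have "(3::int) dvd int (2*a) - int (t + 2*b)" using h1 unfolding modeq .
  then obtain k where k: "int (2*a) - int (t + 2*b) = 3 * k" by (rule dvdE)
  have "(3::int) dvd int (2*x) - int t" using h2 unfolding modeq .
  then obtain m where m: "int (2*x) - int t = 3 * m" by (rule dvdE)
  have "int a - int (x + b) = 3 * (2*k - 2*m - (int a - int (x + b)))" using k m by simp
  then show ?thesis unfolding modeq by (rule dvdI)
qed
lemma ar2: "a mod 3 = (x + b) mod 3 \<Longrightarrow> e mod 3 = (y + b) mod 3 \<Longrightarrow>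
   (r + 2*a) mod 3 = ((r + 2*x + y) mod 3 + 2*e) mod (3::nat)"
proof -
  assume h1: "a mod 3 = (x + b) mod 3" and h2: "e mod 3 = (y + b) mod 3"
  have "(3::int) dvd int a - int (x + b)" using h1 unfolding modeq .
  then obtain k where k: "int a - int (x + b) = 3 * k" by (rule dvdE)
  have "(3::int) dvd int e - int (y + b)" using h2 unfolding modeq .
  then obtain m where m: "int e - int (y + b) = 3 * m" by (rule dvdE)
  have "int (r + 2*a) - int (r + 2*x + y + 2*e) = 3 * (2*k - int y - 2*m)" using k m by simp
  then have "(r + 2*a) mod 3 = (r + 2*x + y + 2*e) mod 3" unfolding modeq by (rule dvdI)
  also have "(r + 2*x + y + 2*e) mod 3 = ((r + 2*x + y) mod 3 + 2*e) mod 3" by (rule mod_add_left_eq[symmetric])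
  finally show ?thesis .
qed
lemma Prow_keed:
  assumes sud: "sudoku B" and ke: "keedwell_exps B c d"
  shows "Prow B = quasi_linear c"
proof -
  have e: "mr B i r j = mr B k t j \<longleftrightarrow> (r + 2 * c i j) mod 3 = (t + 2 * c k j) mod 3"
    if "i<3" "r<3" "j<3" "k<3" "t<3" for i r j k t
  proof -
    have x: "(r + 2 * c i j) mod 3 < 3" "(t + 2 * c k j) mod 3 < 3" by simp_all
    show ?thesis using R_inj[OF sud x] mr_keed[OF ke that(1,2,3)] mr_keed[OF ke that(4,5,3)] by auto
  qed
  have P: "Prow B = (\<forall>i<3. \<forall>k<3. \<forall>r<3. \<exists>t<3. \<forall>j<3. (r + 2 * c i j) mod 3 = (t + 2 * c k j) mod 3)"
    unfolding Prow_def by (simp add: e cong: conj_cong)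
  have c00: "c 0 0 = 0" using ke unfolding keedwell_exps_def by simp
  show ?thesis unfolding P quasi_linear_def
  proof
    assume H: "\<forall>i<3. \<forall>k<3. \<forall>r<3. \<exists>t<3. \<forall>j<3. (r + 2 * c i j) mod 3 = (t + 2 * c k j) mod 3"
    show "\<forall>i<3. \<forall>j<3. c i j mod 3 = (c i 0 + c 0 j) mod 3"
    proof (intro allI impI)
      fix i j :: nat assume ij: "i<3" "j<3"
      obtain t where t: "\<forall>j<3. (0 + 2 * c i j) mod 3 = (t + 2 * c 0 j) mod 3"
        using H[rule_format, of i 0 0] ij by auto
      have 1: "(2 * c i j) mod 3 = (t + 2 * c 0 j) mod 3" using t ij by simp
      have 2: "(2 * c i 0) mod 3 = t mod 3" using t[rule_format, of 0] c00 by simp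
      show "c i j mod 3 = (c i 0 + c 0 j) mod 3" using ar1[OF 1 2] .
    qed
  next
    assume Q: "\<forall>i<3. \<forall>j<3. c i j mod 3 = (c i 0 + c 0 j) mod 3"
    show "\<forall>i<3. \<forall>k<3. \<forall>r<3. \<exists>t<3. \<forall>j<3. (r + 2 * c i j) mod 3 = (t + 2 * c k j) mod 3"
    proof (intro allI impI)
      fix i k r :: nat assume a: "i<3" "k<3" "r<3"
      show "\<exists>t<3. \<forall>j<3. (r + 2 * c i j) mod 3 = (t + 2 * c k j) mod 3"
      proof (intro exI[of _ "(r + 2 * c i 0 + c k 0) mod 3"] conjI allI impI)
        fix j :: nat assume j: "j<3"
        show "(r + 2 * c i j) mod 3 = ((r + 2 * c i 0 + c k 0) mod 3 + 2 * c k j) mod 3"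
          by (rule ar2) (use Q a j in auto)
      qed simp
    qed
  qed
qed

lemma Pcol_keed:
  assumes sud: "sudoku B" and ke: "keedwell_exps B c d"
  shows "Pcol B = quasi_linear d"
proof -
  have e: "mc B i j s = mc B i l t \<longleftrightarrow> (s + 2 * d i j) mod 3 = (t + 2 * d i l) mod 3"
    if "i<3" "s<3" "j<3" "l<3" "t<3" for i s j l t
  proof -
    have x: "(s + 2 * d i j) mod 3 < 3" "(t + 2 * d i l) mod 3 < 3" by simp_all
    show ?thesis using C_inj[OF sud x] mc_keed[OF ke that(1,2,3)] mc_keed[OF ke that(1,5,4)] by auto
  qed
  have P: "Pcol B = (\<forall>j<3. \<forall>l<3. \<forall>s<3. \<exists>t<3. \<forall>i<3. (s + 2 * d i j) mod 3 = (t + 2 * d i l) mod 3)"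
    unfolding Pcol_def by (simp add: e cong: conj_cong)
  have d00: "d 0 0 = 0" using ke unfolding keedwell_exps_def by simp
  show ?thesis unfolding P quasi_linear_def
  proof
    assume H: "\<forall>j<3. \<forall>l<3. \<forall>s<3. \<exists>t<3. \<forall>i<3. (s + 2 * d i j) mod 3 = (t + 2 * d i l) mod 3"
    show "\<forall>i<3. \<forall>j<3. d i j mod 3 = (d i 0 + d 0 j) mod 3"
    proof (intro allI impI)
      fix i j :: nat assume ij: "i<3" "j<3"
      obtain t where t: "\<forall>i<3. (0 + 2 * d i j) mod 3 = (t + 2 * d i 0) mod 3"
        using H[rule_format, of j 0 0] ij by auto
      have 1: "(2 * d i j) mod 3 = (t + 2 * d i 0) mod 3" using t ij by simp
      have 2: "(2 * d 0 j) mod 3 = t mod 3" using t[rule_format, of 0] d00 by simp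
      show "d i j mod 3 = (d i 0 + d 0 j) mod 3" using ar1[OF 1 2] by (simp add: add.commute)
    qed
  next
    assume Q: "\<forall>i<3. \<forall>j<3. d i j mod 3 = (d i 0 + d 0 j) mod 3"
    show "\<forall>j<3. \<forall>l<3. \<forall>s<3. \<exists>t<3. \<forall>i<3. (s + 2 * d i j) mod 3 = (t + 2 * d i l) mod 3"
    proof (intro allI impI)
      fix j l s :: nat assume a: "j<3" "l<3" "s<3"
      show "\<exists>t<3. \<forall>i<3. (s + 2 * d i j) mod 3 = (t + 2 * d i l) mod 3"
      proof (intro exI[of _ "(s + 2 * d 0 j + d 0 l) mod 3"] conjI allI impI)
        fix i :: nat assume i: "i<3"
        show "(s + 2 * d i j) mod 3 = ((s + 2 * d 0 j + d 0 l) mod 3 + 2 * d i l) mod 3"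
        proof (rule ar2[where b="d i 0"])
          show "d i j mod 3 = (d 0 j + d i 0) mod 3" using Q a i by (simp add: add.commute)
          show "d i l mod 3 = (d 0 l + d i 0) mod 3" using Q a i by (simp add: add.commute)
        qed
      qed simp
    qed
  qed
qed

lemma lindeg_inv9:
  assumes "keedwell B"
  shows "linearity_degree B = inv9 B"
proof -
  have sud: "sudoku B" and ex: "\<exists>c d. keedwell_exps B c d" using assms unfolding keedwell_def by auto
  have all: "lin_deg c d = inv9 B" if "keedwell_exps B c d" for c d
    unfolding lin_deg_def inv9_def using Prow_keed[OF sud that] Pcol_keed[OF sud that] by simp
  show ?thesis unfolding linearity_degree_def
  proof (rule the_equality)
    obtain c d where cd: "keedwell_exps B c d" using ex by blast
    show "\<exists>c d. keedwell_exps B c d \<and> inv9 B = lin_deg c d"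
      using cd all[OF cd] by (intro exI[of _ c] exI[of _ d]) simp
    show "\<And>n. \<exists>c d. keedwell_exps B c d \<and> n = lin_deg c d \<Longrightarrow> n = inv9 B" using all by auto
  qed
qed

theorem lemma3p6:
  assumes "keedwell B" and "g \<in> Gk"
  shows "keedwell (act g B) \<and> linearity_degree (act g B) = linearity_degree B"
proof -
  have g9: "g \<in> G9" and k: "keedwell (act g B)" using assms unfolding Gk_def by auto
  have "linearity_degree (act g B) = inv9 (act g B)" using lindeg_inv9[OF k] .
  also have "\<dots> = inv9 B" using G9_inv9[OF g9] .
  also have "\<dots> = linearity_degree B" using lindeg_inv9[OF assms(1)] by simp
  finally show ?thesis using k by simp
qed

end
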